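(* Let $Q\ge1$, $0<s<Q$, let $(X,d_X,\mu)$ be a proper, locally $Q$-homogeneous metric measure space supporting a local $Q$-Poincaré inequality, and let $\pi\colon X\to W$ be a locally David–Semmes $s$-regular map onto a proper metric space $W$. Let $Y$ be a metric space, $p>Q$, $f\colon X\to Y$ continuous with an upper gradient in $L^p_{\mathrm{loc}}(X)$, and $\alpha\in(s,\frac{ps}{p-Q+s}]$. Then for every compact $K\subseteq X$, the set $$E_\alpha=\{a\in W:\mathcal{H}^\alpha(f(\pi^{-1}(a)\cap K))>0\}$$ is a countable union of compact sets.
   Context: Metric measure space: metric space with Borel measure positive and finite on nonempty open sets; proper: closed balls compact. Locally $Q$-homogeneous: for every compact $K$ there are $R>0$, $C\ge1$ with $\mu(B(x,r_2))/r_2^Q\le C\mu(B(x,r_1))/r_1^Q$ for $x\in K$, $0<r_1\le r_2<R$. Upper gradient of continuous $f$: Borel $g\ge0$ with $d_Y(f(\gamma(0)),f(\gamma(1)))\le\int_\gamma g\,ds$ for all rectifiable $\gamma$. Local $Q$-Poincaré inequality: for each compact $K$ there are $C,\sigma\ge1$, $R>0$ such that for every continuous $u\colon X\to\mathbb{R}$ with upper gradient $g$ and every ball $B$ centered in $K$ of radius $<R$, $\frac{1}{\mu(B)}\int_B|u-u_B|d\mu\le C\operatorname{diam}B(\frac{1}{\mu(\sigma B)}\int_{\sigma B}g^Q d\mu)^{1/Q}$. A surjection $\pi\colon X\to W$ between proper metric spaces is locally David–Semmes $s$-regular if for every compact $K\subseteq X$, $\pi|_K$ is Lipschitz and there are $C\ge1$,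 $r_0>0$ such that for every ball $B\subseteq W$ of radius $r<r_0$, $\pi^{-1}(B)\cap K$ can be covered by at most $Cr^{-s}$ balls in $X$ of radius $Cr$. *)

theory Defs
  imports "HOL-Analysis.Analysis"
begin

definition enn_powr :: "ennreal \<Rightarrow> real \<Rightarrow> ennreal" where
  "enn_powr x q = (if x = \<infinity> then \<infinity> else ennreal (enn2real x powr q))"

definition proper_space :: "'a::metric_space itself \<Rightarrow> bool" where
  "proper_space _ \<longleftrightarrow> (\<forall>(x::'a) r. compact (cball x r))"

definition curve_length :: "(real \<Rightarrow> 'a::metric_space) \<Rightarrow> real \<Rightarrow> real \<Rightarrow> ennreal" where
  "curve_length \<gamma> a b =
     (SUP ts \<in> {ts. sorted ts \<and> set ts \<subseteq> {a..b}}.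
        ennreal (\<Sum>i<length ts - 1. dist (\<gamma> (ts ! i)) (\<gamma> (ts ! (i + 1)))))"

definition rectifiable_curve :: "(real \<Rightarrow> 'a::metric_space) \<Rightarrow> bool" where
  "rectifiable_curve \<gamma> \<longleftrightarrow> continuous_on {0..1} \<gamma> \<and> curve_length \<gamma> 0 1 < \<infinity>"

definition arclength_param :: "(real \<Rightarrow> 'a::metric_space) \<Rightarrow> real \<Rightarrow> 'a" where
  "arclength_param \<gamma> s = \<gamma> (SOME t. t \<in> {0..1} \<and> enn2real (curve_length \<gamma> 0 t) = s)"

definition line_integral :: "('a::metric_space \<Rightarrow> ennreal) \<Rightarrow> (real \<Rightarrow> 'a) \<Rightarrow> ennreal" where
  "line_integral g \<gamma> =
     (\<integral>\<^sup>+ s. g (arclength_param \<gamma> s) * indicator {0..enn2real (curve_length \<gamma> 0 1)} s \<partial>lborel)"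

definition upper_gradient :: "('a::metric_space \<Rightarrow> 'b::metric_space) \<Rightarrow> ('a \<Rightarrow> ennreal) \<Rightarrow> bool" where
  "upper_gradient f g \<longleftrightarrow> g \<in> borel_measurable borel \<and>
     (\<forall>\<gamma>. rectifiable_curve \<gamma> \<longrightarrow> ennreal (dist (f (\<gamma> 0)) (f (\<gamma> 1))) \<le> line_integral g \<gamma>)"

definition Lp_loc :: "'a::metric_space measure \<Rightarrow> real \<Rightarrow> ('a \<Rightarrow> ennreal) \<Rightarrow> bool" where
  "Lp_loc \<mu> p g \<longleftrightarrow> g \<in> borel_measurable \<mu> \<and>
     (\<forall>K. compact K \<longrightarrow> (\<integral>\<^sup>+ x. enn_powr (g x) p * indicator K x \<partial>\<mu>) < \<infinity>)"

definition metric_measure_space :: "'a::metric_space measure \<Rightarrow> bool" where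
  "metric_measure_space \<mu> \<longleftrightarrow> sets \<mu> = sets borel \<and>
     (\<forall>(x::'a) r. 0 < r \<longrightarrow> 0 < emeasure \<mu> (ball x r) \<and> emeasure \<mu> (ball x r) < \<infinity>)"

definition locally_homogeneous :: "'a::metric_space measure \<Rightarrow> real \<Rightarrow> bool" where
  "locally_homogeneous \<mu> Q \<longleftrightarrow>
     (\<forall>K. compact K \<longrightarrow> (\<exists>R>0. \<exists>C\<ge>1. \<forall>x\<in>K. \<forall>r1 r2. 0 < r1 \<and> r1 \<le> r2 \<and> r2 < R \<longrightarrow>
        measure \<mu> (ball x r2) / r2 powr Q \<le> C * (measure \<mu> (ball x r1) / r1 powr Q)))"

definition local_poincare :: "'a::metric_space measure \<Rightarrow> real \<Rightarrow> bool" where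
  "local_poincare \<mu> Q \<longleftrightarrow>
     (\<forall>K. compact K \<longrightarrow> (\<exists>C\<ge>1. \<exists>\<sigma>\<ge>1. \<exists>R>0.
        \<forall>(u::'a \<Rightarrow> real) g. continuous_on UNIV u \<and> upper_gradient u g \<longrightarrow>
        (\<forall>x\<in>K. \<forall>r. 0 < r \<and> r < R \<longrightarrow>
          (let B = ball x r; uB = (\<integral>y\<in>B. u y \<partial>\<mu>) / measure \<mu> B;
               G = (\<integral>\<^sup>+ y. enn_powr (g y) Q * indicator (ball x (\<sigma> * r)) y \<partial>\<mu>)
           in G < \<infinity> \<longrightarrow>
              (\<integral>y\<in>B. \<bar>u y - uB\<bar> \<partial>\<mu>) / measure \<mu> B
                \<le> C * diameter B * (enn2real G / measure \<mu> (ball x (\<sigma> * r))) powr (1 / Q)))))"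

definition locally_DS_regular :: "('a::metric_space \<Rightarrow> 'b::metric_space) \<Rightarrow> real \<Rightarrow> bool" where
  "locally_DS_regular \<pi> s \<longleftrightarrow> surj \<pi> \<and>
     (\<forall>K. compact K \<longrightarrow>
        (\<exists>L. L-lipschitz_on K \<pi>) \<and>
        (\<exists>C\<ge>1. \<exists>r0>0. \<forall>w r. 0 < r \<and> r < r0 \<longrightarrow>
           (\<exists>F. finite F \<and> real (card F) \<le> C * r powr (-s) \<and>
                \<pi> -` ball w r \<inter> K \<subseteq> (\<Union>x\<in>F. ball x (C * r)))))"

definition hausdorff_content :: "real \<Rightarrow> real \<Rightarrow> 'a::metric_space set \<Rightarrow> ennreal" where
  "hausdorff_content \<alpha> \<delta> A =
     (INF U \<in> {U :: nat \<Rightarrow> 'a set. A \<subseteq> \<Union>(range U) \<and> (\<forall>i. bounded (U i) \<and> diameter (U i) \<le> \<delta>)}.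
        (\<Sum>i. ennreal (diameter (U i) powr \<alpha>)))"

definition hausdorff_measure :: "real \<Rightarrow> 'a::metric_space set \<Rightarrow> ennreal" where
  "hausdorff_measure \<alpha> A = (SUP \<delta> \<in> {0<..}. hausdorff_content \<alpha> \<delta> A)"

end

theory Submission
  imports Defs
begin

lemma pow_cont:
  fixes d \<alpha> \<epsilon> :: real
  assumes "d \<ge> 0" "\<alpha> > 0" "\<epsilon> > 0"
  shows "\<exists>\<eta>>0. \<eta> \<le> 1/2 \<and> (d + 2*\<eta>) powr \<alpha> \<le> d powr \<alpha> + \<epsilon>"
proof -
  have "((\<lambda>t. (d + 2*t) powr \<alpha>) \<longlongrightarrow> (d + 2*0) powr \<alpha>) (at_right 0)"
  proof (rule tendsto_powr2)
    show "((\<lambda>x. d + 2 * x) \<longlongrightarrow> d + 2 * 0) (at_right 0)" by (intro tendsto_intros)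
    show "\<forall>\<^sub>F x in at_right 0. 0 \<le> d + 2 * x" using assms(1)
      by (auto simp: eventually_at_right_field intro!: exI[of _ 1])
  qed (auto simp: assms)
  hence "\<forall>\<^sub>F t in at_right 0. dist ((d + 2*t) powr \<alpha>) (d powr \<alpha>) < \<epsilon>"
    using assms(3) tendstoD by fastforce
  then obtain b where b: "b > 0" "\<And>y. 0 < y \<Longrightarrow> y < b \<Longrightarrow> dist ((d + 2*y) powr \<alpha>) (d powr \<alpha>) < \<epsilon>"
    by (auto simp: eventually_at_right_field)
  define \<eta> where "\<eta> = min (b/2) (1/2)"
  have "\<eta> > 0" "\<eta> < b" "\<eta> \<le> 1/2" using b by (auto simp: \<eta>_def)
  with b(2)[of \<eta>] show ?thesis by (auto simp: dist_real_def)
qed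

lemma enlarge:
  fixes U :: "'a::metric_space set"
  assumes "bounded U" "\<eta> > 0"
  shows "open (\<Union>y\<in>U. ball y \<eta>)" "U \<subseteq> (\<Union>y\<in>U. ball y \<eta>)"
    "bounded (\<Union>y\<in>U. ball y \<eta>)" "diameter (\<Union>y\<in>U. ball y \<eta>) \<le> diameter U + 2*\<eta>"
proof -
  show "open (\<Union>y\<in>U. ball y \<eta>)" by auto
  show "U \<subseteq> (\<Union>y\<in>U. ball y \<eta>)" using assms by auto
  obtain x0 R where R: "U \<subseteq> cball x0 R" using assms(1) bounded_subset_cball by blast
  have "(\<Union>y\<in>U. ball y \<eta>) \<subseteq> cball x0 (R + \<eta>)"
    using R by (auto simp: subset_iff dist_commute) (smt (verit) dist_triangle mem_ball mem_cball)
  thus "bounded (\<Union>y\<in>U. ball y \<eta>)" using bounded_cball bounded_subset by blast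
  show "diameter (\<Union>y\<in>U. ball y \<eta>) \<le> diameter U + 2*\<eta>"
  proof (cases "U = {}")
    case True thus ?thesis using assms by simp
  next
    case False
    hence ne: "(\<Union>y\<in>U. ball y \<eta>) \<noteq> {}" using assms by auto
    have bd: "dist x y \<le> diameter U + 2*\<eta>" if xy: "x \<in> (\<Union>z\<in>U. ball z \<eta>)" "y \<in> (\<Union>z\<in>U. ball z \<eta>)" for x y
    proof -
      obtain u v where uv: "u \<in> U" "v \<in> U" "dist u x < \<eta>" "dist v y < \<eta>" using xy by (auto simp: mem_ball)
      have "dist u v \<le> diameter U" using diameter_bounded_bound[OF assms(1) uv(1,2)] .
      moreover have "dist x y \<le> dist x u + dist u v + dist v y"
        using dist_triangle[of x y u] dist_triangle[of u y v] by linarith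
      ultimately show ?thesis using uv by (simp add: dist_commute)
    qed
    have "diameter (\<Union>z\<in>U. ball z \<eta>) = (SUP (x,y)\<in>(\<Union>z\<in>U. ball z \<eta>)\<times>(\<Union>z\<in>U. ball z \<eta>). dist x y)"
      using ne by (simp add: diameter_def)
    also have "\<dots> \<le> diameter U + 2*\<eta>"
      proof (rule cSUP_least)
      show "(\<Union>z\<in>U. ball z \<eta>) \<times> (\<Union>z\<in>U. ball z \<eta>) \<noteq> {}" using ne by auto
    next
      fix p assume "p \<in> (\<Union>z\<in>U. ball z \<eta>) \<times> (\<Union>z\<in>U. ball z \<eta>)"
      then obtain x y where "p = (x,y)" "x \<in> (\<Union>z\<in>U. ball z \<eta>)" "y \<in> (\<Union>z\<in>U. ball z \<eta>)" by (cases p) blast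
      thus "(case p of (x, y) \<Rightarrow> dist x y) \<le> diameter U + 2 * \<eta>" using bd by simp
    qed
    finally show ?thesis .
  qed
qed

lemma hc_empty:
  assumes "\<delta> \<ge> 0" "\<alpha> > 0"
  shows "hausdorff_content \<alpha> \<delta> ({} :: 'a::metric_space set) = 0"
proof -
  have "hausdorff_content \<alpha> \<delta> ({} :: 'a set) \<le> (\<Sum>i. ennreal (diameter ((\<lambda>i. {}::'a set) i) powr \<alpha>))"
    unfolding hausdorff_content_def by (rule INF_lower) (use assms in auto)
  thus ?thesis by simp
qed

lemma hc_mono:
  assumes "\<delta> \<le> \<delta>'"
  shows "hausdorff_content \<alpha> \<delta>' A \<le> hausdorff_content \<alpha> \<delta> A"
  unfolding hausdorff_content_def
  by (rule INF_superset_mono) (use assms in \<open>auto intro: order_trans\<close>)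

lemma hc_zero:
  fixes A :: "'a::metric_space set"
  assumes "\<alpha> > 0" "\<delta>' > 0" "hausdorff_content \<alpha> \<delta> A = 0"
  shows "hausdorff_content \<alpha> \<delta>' A = 0"
proof -
  have key: "hausdorff_content \<alpha> \<delta>' A \<le> 0 + ennreal e" if e: "e > 0" for e
  proof -
    define \<epsilon> where "\<epsilon> = min e (\<delta>' powr \<alpha>)"
    have \<epsilon>: "\<epsilon> > 0" "\<epsilon> \<le> e" "\<epsilon> \<le> \<delta>' powr \<alpha>" using e assms by (auto simp: \<epsilon>_def)
    have "hausdorff_content \<alpha> \<delta> A < ennreal \<epsilon>" using assms \<epsilon> by simp
    then obtain U where U: "A \<subseteq> \<Union>(range U)" "\<And>i. bounded (U i)" "\<And>i. diameter (U i) \<le> \<delta>"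
      and S: "(\<Sum>i. ennreal (diameter (U i) powr \<alpha>)) < ennreal \<epsilon>"
      unfolding hausdorff_content_def INF_less_iff by auto
    have "diameter (U i) \<le> \<delta>'" for i
    proof (rule ccontr)
      assume "\<not> ?thesis"
      hence "\<delta>' powr \<alpha> \<le> diameter (U i) powr \<alpha>" using assms by (intro powr_mono2) auto
      moreover have "ennreal (diameter (U i) powr \<alpha>) < ennreal \<epsilon>" using ennreal_suminf_lessD[OF S] .
      hence "diameter (U i) powr \<alpha> < \<epsilon>" using \<epsilon> by (simp add: ennreal_less_iff)
      ultimately show False using \<epsilon> by linarith
    qed
    hence "hausdorff_content \<alpha> \<delta>' A \<le> (\<Sum>i. ennreal (diameter (U i) powr \<alpha>))"
      unfolding hausdorff_content_def using U by (intro INF_lower) auto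
    also have "\<dots> \<le> ennreal e" by (rule order_trans[OF less_imp_le[OF S] ennreal_leI[OF \<epsilon>(2)]])
    finally show ?thesis by simp
  qed
  have "hausdorff_content \<alpha> \<delta>' A \<le> 0"
  proof (rule ennreal_le_epsilon)
    fix e :: real assume "0 < e" thus "hausdorff_content \<alpha> \<delta>' A \<le> 0 + ennreal e" by (rule key)
  qed
  thus ?thesis by simp
qed

lemma hm_pos_iff:
  fixes A :: "'a::metric_space set"
  assumes "\<alpha> > 0" "\<delta> > 0"
  shows "hausdorff_measure \<alpha> A > 0 \<longleftrightarrow> hausdorff_content \<alpha> \<delta> A > 0"
proof
  assume "hausdorff_measure \<alpha> A > 0"
  then obtain \<delta>' where "\<delta>' > 0" "hausdorff_content \<alpha> \<delta>' A > 0"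
    unfolding hausdorff_measure_def less_SUP_iff by auto
  show "hausdorff_content \<alpha> \<delta> A > 0"
  proof (rule ccontr)
    assume "\<not> hausdorff_content \<alpha> \<delta> A > 0"
    hence "hausdorff_content \<alpha> \<delta> A = 0" by (simp add: not_gr_zero)
    hence "hausdorff_content \<alpha> \<delta>' A = 0" by (rule hc_zero[OF assms(1) \<open>\<delta>' > 0\<close>])
    thus False using \<open>hausdorff_content \<alpha> \<delta>' A > 0\<close> by simp
  qed
next
  assume "hausdorff_content \<alpha> \<delta> A > 0"
  also have "hausdorff_content \<alpha> \<delta> A \<le> hausdorff_measure \<alpha> A"
    unfolding hausdorff_measure_def using assms by (intro SUP_upper) auto
  finally show "hausdorff_measure \<alpha> A > 0" .
qed

lemma usc:
  fixes \<pi> :: "'x::metric_space \<Rightarrow> 'w::metric_space" and f :: "'x \<Rightarrow> 'y::metric_space"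
  assumes cpi: "continuous_on K \<pi>" and K: "compact K" and cf: "continuous_on UNIV f"
    and \<alpha>: "\<alpha> > 0" and c: "c > 0"
    and a: "a \<in> closure {b. ennreal c \<le> hausdorff_content \<alpha> 2 (f ` (\<pi> -` {b} \<inter> K))}"
  shows "ennreal c \<le> hausdorff_content \<alpha> 1 (f ` (\<pi> -` {a} \<inter> K))"
  unfolding hausdorff_content_def
proof (rule INF_greatest)
  fix U :: "nat \<Rightarrow> 'y set" assume "U \<in> {U. f ` (\<pi> -` {a} \<inter> K) \<subseteq> \<Union> (range U) \<and> (\<forall>i. bounded (U i) \<and> diameter (U i) \<le> 1)}"
  hence AU: "f ` (\<pi> -` {a} \<inter> K) \<subseteq> \<Union> (range U)" and Ub: "\<And>i. bounded (U i)"
    and Ud: "\<And>i. diameter (U i) \<le> 1" by auto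
  show "ennreal c \<le> (\<Sum>i. ennreal (diameter (U i) powr \<alpha>))"
  proof (rule ccontr)
    assume "\<not> ?thesis"
    hence lt: "(\<Sum>i. ennreal (diameter (U i) powr \<alpha>)) < ennreal c" by simp
    then obtain S where S: "S \<ge> 0" "(\<Sum>i. ennreal (diameter (U i) powr \<alpha>)) = ennreal S"
      by (metis less_top_ennreal ennreal_less_top order.strict_trans)
    with lt have Sc: "S < c" by (simp add: ennreal_less_iff)
    define e where "e = (c - S) / 2"
    have e: "e > 0" using Sc by (simp add: e_def)
    have "\<forall>i. \<exists>\<eta>>0. \<eta> \<le> 1/2 \<and> (diameter (U i) + 2*\<eta>) powr \<alpha> \<le> diameter (U i) powr \<alpha> + e * (1/2)^Suc i"
      using pow_cont[OF diameter_ge_0[OF Ub] \<alpha>] e by simp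
    then obtain \<eta> where \<eta>: "\<And>i. \<eta> i > 0" "\<And>i. \<eta> i \<le> 1/2"
      "\<And>i. (diameter (U i) + 2*\<eta> i) powr \<alpha> \<le> diameter (U i) powr \<alpha> + e * (1/2)^Suc i"
      by metis
    define V where "V i = (\<Union>y\<in>U i. ball y (\<eta> i))" for i
    have en1: "open (V i)" "U i \<subseteq> V i" "bounded (V i)" "diameter (V i) \<le> diameter (U i) + 2 * \<eta> i" for i
      unfolding V_def using enlarge[OF Ub[of i] \<eta>(1)[of i]] by auto
    note en = en1(1) en1(2) en1(3) en1(4)
    define G where "G = \<Union>(range V)"
    have oG: "open G" unfolding G_def using en(1) by auto
    have AG: "f ` (\<pi> -` {a} \<inter> K) \<subseteq> G" using AU en(2) unfolding G_def by blast
    define T where "T = \<pi> ` (K \<inter> f -` (-G))"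
    have "closed (f -` (-G))" using oG cf by (intro continuous_closed_vimage) (auto simp: continuous_on_eq_continuous_at)
    hence "compact (K \<inter> f -` (-G))" using K by auto
    hence "compact T" unfolding T_def
      by (intro compact_continuous_image continuous_on_subset[OF cpi]) auto
    hence "open (-T)" by (simp add: compact_imp_closed open_Compl)
    moreover have "a \<in> -T" using AG unfolding T_def by auto
    ultimately obtain r where r: "r > 0" "\<And>y. dist y a < r \<Longrightarrow> y \<in> -T"
      unfolding open_dist by blast
    obtain b where b: "ennreal c \<le> hausdorff_content \<alpha> 2 (f ` (\<pi> -` {b} \<inter> K))" "dist b a < r"
      using a r(1) unfolding closure_approachable by blast
    have bG: "f ` (\<pi> -` {b} \<inter> K) \<subseteq> G" using r(2)[OF b(2)] unfolding T_def by auto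
    have dV: "diameter (V i) \<le> diameter (U i) + 2 * \<eta> i" for i using en(4) .
    have "diameter (V i) \<le> 2" for i using dV[of i] Ud[of i] \<eta>(2)[of i] by linarith
    hence "hausdorff_content \<alpha> 2 (f ` (\<pi> -` {b} \<inter> K)) \<le> (\<Sum>i. ennreal (diameter (V i) powr \<alpha>))"
      unfolding hausdorff_content_def using bG en(3) unfolding G_def by (intro INF_lower) auto
    also have "\<dots> \<le> (\<Sum>i. ennreal (diameter (U i) powr \<alpha>) + ennreal (e * (1/2)^Suc i))"
    proof (rule suminf_le)
      fix i
      have "diameter (V i) powr \<alpha> \<le> (diameter (U i) + 2*\<eta> i) powr \<alpha>"
        using dV[of i] diameter_ge_0[OF en(3)[of i]] \<alpha> by (intro powr_mono2) auto
      also have "\<dots> \<le> diameter (U i) powr \<alpha> + e * (1/2)^Suc i" by (rule \<eta>(3))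
      finally show "ennreal (diameter (V i) powr \<alpha>) \<le> ennreal (diameter (U i) powr \<alpha>) + ennreal (e * (1/2)^Suc i)"
        using e by (simp add: ennreal_plus[symmetric] ennreal_leI del: ennreal_plus)
    qed auto
    also have "\<dots> = (\<Sum>i. ennreal (diameter (U i) powr \<alpha>)) + (\<Sum>i. ennreal (e * (1/2)^Suc i))"
      by (rule suminf_add[symmetric]) auto
    also have "(\<Sum>i. ennreal (e * (1/2)^Suc i)) = ennreal (\<Sum>i. e * (1/2)^Suc i)"
      using e by (intro suminf_ennreal2) (auto intro!: summable_mult sums_summable[OF power_half_series])
    also have "(\<Sum>i. e * (1/2::real)^Suc i) = e"
      using sums_unique[OF sums_mult[OF power_half_series, of e]] by simp
    finally have "ennreal c \<le> ennreal S + ennreal e" using b(1) S by simp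
    also have "\<dots> = ennreal (S + e)" using S e by (simp add: ennreal_plus)
    finally have "c \<le> S + e" using c by (simp add: ennreal_le_iff2)
    thus False using Sc by (simp add: e_def field_simps)
  qed
qed

theorem lemma5p1:
  fixes \<mu> :: "'x::metric_space measure"
    and \<pi> :: "'x \<Rightarrow> 'w::metric_space"
    and f :: "'x \<Rightarrow> 'y::metric_space"
    and Q s p \<alpha> :: real
    and K :: "'x set"
  assumes "Q \<ge> 1" and "0 < s" and "s < Q"
    and "proper_space TYPE('x)"
    and "metric_measure_space \<mu>"
    and "locally_homogeneous \<mu> Q"
    and "local_poincare \<mu> Q"
    and "proper_space TYPE('w)"
    and "locally_DS_regular \<pi> s"
    and "p > Q"
    and "continuous_on UNIV f"
    and "\<exists>g. upper_gradient f g \<and> Lp_loc \<mu> p g"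
    and "s < \<alpha>" and "\<alpha> \<le> p * s / (p - Q + s)"
    and "compact K"
  shows "\<exists>C :: nat \<Rightarrow> 'w set. (\<forall>i. compact (C i)) \<and>
           {a. hausdorff_measure \<alpha> (f ` (\<pi> -` {a} \<inter> K)) > 0} = (\<Union>i. C i)"
proof -
  have \<alpha>: "\<alpha> > 0" using assms(2,13) by linarith
  have "\<forall>K. compact K \<longrightarrow> (\<exists>L. L-lipschitz_on K \<pi>) \<and>
        (\<exists>C\<ge>1. \<exists>r0>0. \<forall>w r. 0 < r \<and> r < r0 \<longrightarrow>
           (\<exists>F. finite F \<and> real (card F) \<le> C * r powr (-s) \<and>
                \<pi> -` ball w r \<inter> K \<subseteq> (\<Union>x\<in>F. ball x (C * r))))"
    using assms(9) unfolding locally_DS_regular_def by (rule conjunct2)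
  from this[rule_format, OF assms(15)] have "\<exists>L. L-lipschitz_on K \<pi>" by (rule conjunct1)
  then obtain L where "L-lipschitz_on K \<pi>" ..
  hence cpi: "continuous_on K \<pi>" by (rule lipschitz_on_continuous_on)
  define Ab where "Ab b = f ` (\<pi> -` {b} \<inter> K)" for b
  define S where "S n = {b. ennreal (1 / real (Suc n)) \<le> hausdorff_content \<alpha> 2 (Ab b)}" for n
  define C where "C n = closure (S n)" for n
  have cK: "compact (\<pi> ` K)" using cpi assms(15) by (rule compact_continuous_image)
  have SK: "S n \<subseteq> \<pi> ` K" for n
  proof
    fix b assume "b \<in> S n"
    hence le: "ennreal (1 / real (Suc n)) \<le> hausdorff_content \<alpha> 2 (Ab b)" unfolding S_def by simp
    have "ennreal (1 / real (Suc n)) > 0" by simp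
    hence "hausdorff_content \<alpha> 2 (Ab b) \<noteq> 0" using le by auto
    hence "Ab b \<noteq> {}" using hc_empty[of 2 \<alpha>] \<alpha> by auto
    thus "b \<in> \<pi> ` K" unfolding Ab_def by auto
  qed
  have CK: "C n \<subseteq> \<pi> ` K" for n
    unfolding C_def using SK cK by (intro closure_minimal) (auto intro: compact_imp_closed)
  have cC: "compact (C n)" for n
  proof -
    have "compact (\<pi> ` K \<inter> C n)" using cK by (intro compact_Int_closed) (auto simp: C_def)
    moreover have "\<pi> ` K \<inter> C n = C n" using CK by blast
    ultimately show ?thesis by simp
  qed
  have "{a. hausdorff_measure \<alpha> (Ab a) > 0} = (\<Union>i. C i)"
  proof (intro equalityI subsetI)
    fix a assume "a \<in> {a. hausdorff_measure \<alpha> (Ab a) > 0}"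
    hence pos: "hausdorff_content \<alpha> 2 (Ab a) > 0" using hm_pos_iff[OF \<alpha>, of 2] by auto
    have "\<exists>n. ennreal (1 / real (Suc n)) \<le> hausdorff_content \<alpha> 2 (Ab a)"
    proof (cases "hausdorff_content \<alpha> 2 (Ab a)" rule: ennreal_cases)
      case (real r)
      with pos have "r > 0" by (simp add: ennreal_less_iff)
      then obtain n where "inverse (real (Suc n)) < r" using reals_Archimedean by blast
      thus ?thesis using real by (intro exI[of _ n]) (simp add: ennreal_leI inverse_eq_divide)
    qed simp
    then obtain n where "a \<in> S n" unfolding S_def by auto
    thus "a \<in> (\<Union>i. C i)" unfolding C_def using closure_subset by blast
  next
    fix a assume "a \<in> (\<Union>i. C i)"
    then obtain n where "a \<in> C n" by auto
    hence "a \<in> closure {b. ennreal (1 / real (Suc n)) \<le> hausdorff_content \<alpha> 2 (f ` (\<pi> -` {b} \<inter> K))}"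
      unfolding C_def S_def Ab_def .
    hence le: "ennreal (1 / real (Suc n)) \<le> hausdorff_content \<alpha> 1 (Ab a)"
      unfolding Ab_def by (rule usc[OF cpi assms(15) assms(11) \<alpha>, rotated]) simp
    have "ennreal (1 / real (Suc n)) > 0" by simp
    hence "hausdorff_content \<alpha> 1 (Ab a) > 0" using le by (rule less_le_trans)
    thus "a \<in> {a. hausdorff_measure \<alpha> (Ab a) > 0}" using hm_pos_iff[OF \<alpha>, of 1] by auto
  qed
  hence "{a. hausdorff_measure \<alpha> (f ` (\<pi> -` {a} \<inter> K)) > 0} = (\<Union>i. C i)"
    by (simp only: Ab_def)
  thus ?thesis using cC by (intro exI[of _ C] conjI allI)
qed

end
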